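(* Let $h>0$, let $\phi_h(x)=\frac{1}{\sqrt{2\pi h}}e^{-x^2/(2h)}$ for $x\in\mathbb{R}$, and for an integer $C$ let $\tilde\phi_h(x)=\sum_{j\in\mathbb{Z}}\phi_h(x+2\pi j)$ and $\tilde\phi_h^{(C)}(x)=\sum_{|j|\le C}\phi_h(x+2\pi j)$. For points $x_1,\dots,x_n\in[-\pi,\pi]$ and the empirical measure $\nu=\frac1n\sum_{i=1}^n\delta_{x_i}$, set $(\tilde\phi_h*\nu)(x)=\frac1n\sum_{i=1}^n\tilde\phi_h(x-x_i)$ and $(\tilde\phi_h^{(C)}*\nu)(x)=\frac1n\sum_{i=1}^n\tilde\phi_h^{(C)}(x-x_i)$ for $x\in[-\pi,\pi]$. If $2\pi(C-1)\ge\sqrt h$, then $$\sup_{x\in[-\pi,\pi]}\Big|\frac{\partial(\tilde\phi_h*\nu)}{\partial x}(x)-\frac{\partial(\tilde\phi_h^{(C)}*\nu)}{\partial x}(x)\Big|\le\frac1\pi\,\phi_h\big(2\pi(C-1)\big).$$ *)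

theory Defs
  imports "HOL-Analysis.Analysis"
begin

definition gauss :: "real \<Rightarrow> real \<Rightarrow> real" where
  "gauss h x = exp (- (x^2) / (2*h)) / sqrt (2*pi*h)"

definition wrapped_gauss :: "real \<Rightarrow> real \<Rightarrow> real" where
  "wrapped_gauss h x = (\<Sum>\<^sub>\<infinity>j::int. gauss h (x + 2 * pi * real_of_int j))"

definition wrapped_gauss_trunc :: "real \<Rightarrow> int \<Rightarrow> real \<Rightarrow> real" where
  "wrapped_gauss_trunc h C x = (\<Sum>j\<in>{-C..C}. gauss h (x + 2 * pi * real_of_int j))"

end

theory Submission
  imports Defs
begin

definition gd :: "real \<Rightarrow> real \<Rightarrow> real" where
  "gd h t = t / h * gauss h t"

lemma gauss_even: "gauss h (-t) = gauss h t"
  by (simp add: gauss_def)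

lemma gauss_pos: "h > 0 \<Longrightarrow> gauss h t > 0"
  by (simp add: gauss_def)

lemma gauss_deriv: assumes h: "h > 0" shows "(gauss h has_real_derivative (- gd h t)) (at t)"
  unfolding gd_def gauss_def using h
  by (auto intro!: derivative_eq_intros simp: field_simps power2_eq_square)

lemma gd_deriv: "h > 0 \<Longrightarrow> (gd h has_real_derivative (gauss h t / h * (1 - t^2/h))) (at t)"
proof -
  assume h: "h > 0"
  have "((\<lambda>t. t / h * gauss h t) has_real_derivative (1/h * gauss h t + t/h * (- gd h t))) (at t)"
    using h by (auto intro!: derivative_eq_intros gauss_deriv[OF h] simp: field_simps)
  moreover have "1/h * gauss h t + t/h * (- gd h t) = gauss h t / h * (1 - t^2/h)"
    using h by (simp add: gd_def field_simps power2_eq_square)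
  moreover have "gd h = (\<lambda>t. t / h * gauss h t)" by (rule ext) (simp add: gd_def)
  ultimately show ?thesis by simp
qed

lemma gd_mono:
  assumes h: "h > 0" and s: "sqrt h \<le> s" and st: "s \<le> t"
  shows "gd h t \<le> gd h s"
proof (rule DERIV_nonpos_imp_nonincreasing[OF st])
  fix x assume x1: "s \<le> x" and x2: "x \<le> t"
  note x = x1 x2
  have "sqrt h \<le> x" using x s by linarith
  hence "(sqrt h)^2 \<le> x^2" using h by (intro power_mono) auto
  hence "h \<le> x^2" using h by simp
  hence "1 - x^2/h \<le> 0" using h by (simp add: field_simps)
  moreover have "gauss h x / h \<ge> 0" using gauss_pos[OF h, of x] h by (intro divide_nonneg_pos) auto
  ultimately have "gauss h x / h * (1 - x^2/h) \<le> 0" by (rule mult_nonneg_nonpos[rotated])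
  thus "\<exists>y. (gd h has_real_derivative y) (at x) \<and> y \<le> 0"
    using gd_deriv[OF h] by blast
qed

lemma gauss_mono:
  assumes h: "h > 0" and "0 \<le> s" "s \<le> t"
  shows "gauss h t \<le> gauss h s"
proof -
  have "s^2 \<le> t^2" using assms by (intro power_mono) auto
  hence "- (t^2) / (2*h) \<le> - (s^2)/(2*h)" using h by (simp add: divide_right_mono)
  thus ?thesis unfolding gauss_def using h by (intro divide_right_mono) auto
qed

lemma gd_nonneg: "h > 0 \<Longrightarrow> t \<ge> 0 \<Longrightarrow> gd h t \<ge> 0"
  using gauss_pos[of h t] by (simp add: gd_def)

lemma gauss_le_gd:
  assumes h: "h > 0" and t: "sqrt h \<le> t"
  shows "gauss h t \<le> sqrt h * gd h t"
proof -
  have "sqrt h * gd h t = (sqrt h * t / h) * gauss h t" by (simp add: gd_def)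
  moreover have "sqrt h * t / h \<ge> 1"
  proof -
    have "sqrt h * sqrt h \<le> sqrt h * t" using t h by (intro mult_left_mono) auto
    thus ?thesis using h by (simp add: field_simps)
  qed
  ultimately show ?thesis using gauss_pos[OF h, of t]
    by (metis mult_le_cancel_right1 order_less_imp_not_less)
qed

lemma gd_step:
  assumes h: "h > 0" and t: "sqrt h + 2*pi \<le> t"
  shows "2*pi * gd h t \<le> gauss h (t - 2*pi) - gauss h t"
proof -
  have "t - 2*pi < t" by simp
  from MVT2[OF this, of "gauss h" "\<lambda>x. - gd h x"] gauss_deriv[OF h]
  obtain z where z: "t - 2*pi < z" "z < t" "gauss h t - gauss h (t - 2*pi) = (t - (t - 2*pi)) * (- gd h z)"
    by blast
  have "gd h t \<le> gd h z" using z t h by (intro gd_mono) auto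
  hence "pi*(2*gd h t) \<le> pi*(2*gd h z)" using pi_gt_zero by (intro mult_left_mono) auto
  moreover have "gauss h (t - 2*pi) - gauss h t = 2*pi * gd h z" using z(3) by (simp add: algebra_simps)
  ultimately show ?thesis by linarith
qed

lemma gd_series:
  assumes h: "h > 0" and t0: "sqrt h + 2*pi \<le> t0"
  shows "summable (\<lambda>n. gd h (t0 + 2*pi*real n)) \<and> (\<Sum>n. gd h (t0 + 2*pi*real n)) \<le> gauss h (t0 - 2*pi) / (2*pi)"
proof -
  define g where "g n = gauss h (t0 - 2*pi + 2*pi*real n)" for n
  have part: "(\<Sum>k<N. gd h (t0 + 2*pi*real k)) \<le> gauss h (t0 - 2*pi) / (2*pi)" for N
  proof -
    have "(\<Sum>k<N. 2*pi * gd h (t0 + 2*pi*real k)) \<le> (\<Sum>k<N. g k - g (Suc k))"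
    proof (rule sum_mono)
      fix k assume "k \<in> {..<N}"
      have "sqrt h + 2*pi \<le> t0 + 2*pi*real k" using t0 pi_gt_zero by (simp add: add_increasing2)
      from gd_step[OF h this] show "2*pi * gd h (t0 + 2*pi*real k) \<le> g k - g (Suc k)"
        by (simp add: g_def algebra_simps)
    qed
    also have "\<dots> = g 0 - g N" using sum_lessThan_telescope'[of g N] by simp
    also have "\<dots> \<le> g 0" using gauss_pos[OF h] by (simp add: g_def less_imp_le)
    finally have "2*pi * (\<Sum>k<N. gd h (t0 + 2*pi*real k)) \<le> g 0" by (simp add: sum_distrib_left)
    thus ?thesis by (simp add: g_def field_simps)
  qed
  have nn: "gd h (t0 + 2*pi*real n) \<ge> 0" for n
  proof -
    have "0 \<le> 2*pi*real n" by simp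
    thus ?thesis using t0 real_sqrt_ge_zero[of h] pi_gt_zero h by (intro gd_nonneg[OF h]) linarith
  qed
  have sm: "summable (\<lambda>n. gd h (t0 + 2*pi*real n))"
  proof (rule bounded_imp_summable[OF nn])
    fix n show "(\<Sum>k\<le>n. gd h (t0 + 2*pi*real k)) \<le> gauss h (t0 - 2*pi) / (2*pi)"
      using part[of "Suc n"] by (simp add: lessThan_Suc_atMost)
  qed
  show ?thesis using sm suminf_le_const[OF sm part] by blast
qed


context
  fixes h :: real and C :: int
  assumes hpos: "h > 0" and hC: "2*pi*(of_int C - 1) \<ge> sqrt h"
begin

definition cc :: "nat \<Rightarrow> real" where "cc n = 2*pi*(of_int C + 1 + real n)"
definition uu :: "nat \<Rightarrow> real \<Rightarrow> real" where "uu n z = gauss h (cc n + z) + gauss h (cc n - z)"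
definition uu' :: "nat \<Rightarrow> real \<Rightarrow> real" where "uu' n z = gd h (cc n - z) - gd h (cc n + z)"
definition MM :: "nat \<Rightarrow> real" where "MM n = 2 * gd h (2*pi * of_int C - pi + 2*pi*real n)"
definition TT :: "real \<Rightarrow> real" where "TT z = (\<Sum>n. uu n z)"
definition TT' :: "real \<Rightarrow> real" where "TT' z = (\<Sum>n. uu' n z)"

lemma sqh: "sqrt h \<ge> 0" using hpos by simp

lemma hC': "sqrt h + 2*pi \<le> 2*pi * of_int C"
proof -
  have "2*pi*(of_int C - 1) = 2*pi * of_int C - 2*pi" by (simp add: algebra_simps)
  thus ?thesis using hC by linarith
qed

lemma MM_summable: "summable MM"
proof -
  have "sqrt h + 2*pi \<le> 2*pi * of_int C + pi" using hC' pi_gt_zero by linarith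
  from gd_series[OF hpos this] have "summable (\<lambda>n. gd h (2*pi * of_int C + pi + 2*pi*real n))" by blast
  hence "summable (\<lambda>n. MM (Suc n))"
    by (rule summable_mult[of _ 2, THEN summable_cong[THEN iffD1, rotated]])
       (simp add: MM_def algebra_simps)
  thus ?thesis by (simp add: summable_Suc_iff)
qed

lemma cc_bound: "\<bar>z\<bar> < 3*pi \<Longrightarrow> 2*pi * of_int C - pi + 2*pi*real n \<le> cc n + z \<and> 2*pi * of_int C - pi + 2*pi*real n \<le> cc n - z"
  by (auto simp: cc_def algebra_simps abs_less_iff)

lemma base_ge: "sqrt h \<le> 2*pi * of_int C - pi + 2*pi*real n"
proof -
  have "0 \<le> 2*pi*real n" by simp
  thus ?thesis using hC' pi_gt_zero by linarith
qed

lemma uu'_bound: "\<bar>z\<bar> < 3*pi \<Longrightarrow> \<bar>uu' n z\<bar> \<le> MM n"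
proof -
  assume z: "\<bar>z\<bar> < 3*pi"
  let ?b = "2*pi * of_int C - pi + 2*pi*real n"
  have b: "sqrt h \<le> ?b" by (rule base_ge)
  note cb = cc_bound[OF z, of n]
  have b0: "0 \<le> ?b" using b sqh by linarith
  have c1: "0 \<le> cc n - z" "0 \<le> cc n + z" "sqrt h \<le> cc n - z" "sqrt h \<le> cc n + z" using cb b b0 by linarith+
  have 1: "0 \<le> gd h (cc n - z)" "gd h (cc n - z) \<le> gd h ?b"
    using cb b c1 by (auto intro!: gd_nonneg[OF hpos] gd_mono[OF hpos])
  have 2: "0 \<le> gd h (cc n + z)" "gd h (cc n + z) \<le> gd h ?b"
    using cb b c1 by (auto intro!: gd_nonneg[OF hpos] gd_mono[OF hpos])
  show ?thesis using 1 2 by (simp add: uu'_def MM_def abs_le_iff)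
qed

lemma uu_summable: "\<bar>z\<bar> < 3*pi \<Longrightarrow> summable (\<lambda>n. uu n z)"
proof -
  assume z: "\<bar>z\<bar> < 3*pi"
  show ?thesis
  proof (rule summable_comparison_test[OF _ summable_mult[OF MM_summable, of "sqrt h"]])
    show "\<exists>N. \<forall>n\<ge>N. norm (uu n z) \<le> sqrt h * MM n"
    proof (intro exI allI impI)
      fix n :: nat
      let ?b = "2*pi * of_int C - pi + 2*pi*real n"
      have b: "sqrt h \<le> ?b" by (rule base_ge)
      note cb = cc_bound[OF z, of n]
      have c1: "sqrt h \<le> cc n - z" "sqrt h \<le> cc n + z" using cb b by linarith+
      have "gauss h (cc n + z) \<le> sqrt h * gd h (cc n + z)"
        using c1 by (intro gauss_le_gd[OF hpos]) auto
      also have "\<dots> \<le> sqrt h * gd h ?b" using cb b c1 sqh by (intro mult_left_mono gd_mono[OF hpos]) auto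
      finally have 1: "gauss h (cc n + z) \<le> sqrt h * gd h ?b" .
      have "gauss h (cc n - z) \<le> sqrt h * gd h (cc n - z)"
        using c1 by (intro gauss_le_gd[OF hpos]) auto
      also have "\<dots> \<le> sqrt h * gd h ?b" using cb b c1 sqh by (intro mult_left_mono gd_mono[OF hpos]) auto
      finally have 2: "gauss h (cc n - z) \<le> sqrt h * gd h ?b" .
      have "0 \<le> uu n z" using gauss_pos[OF hpos] by (simp add: uu_def add_nonneg_nonneg less_imp_le)
      thus "norm (uu n z) \<le> sqrt h * MM n" using 1 2 by (simp add: uu_def MM_def algebra_simps)
    qed
  qed
qed

lemma uu_deriv: "((\<lambda>z. uu n z) has_real_derivative uu' n z) (at z)"
proof -
  have "((\<lambda>z. gauss h (cc n + z) + gauss h (cc n - z)) has_real_derivative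
          (- gd h (cc n + z)) * 1 + (- gd h (cc n - z)) * (-1)) (at z)"
  proof (intro DERIV_add DERIV_chain2[OF gauss_deriv[OF hpos]])
    show "((\<lambda>z. cc n + z) has_real_derivative 1) (at z)" by (auto intro!: derivative_eq_intros)
    show "((\<lambda>z. cc n - z) has_real_derivative -1) (at z)" by (auto intro!: derivative_eq_intros)
  qed
  thus ?thesis by (simp add: uu_def[abs_def] uu'_def)
qed

lemma TT_deriv: "\<bar>z\<bar> < 3*pi \<Longrightarrow> (TT has_real_derivative TT' z) (at z)"
proof -
  assume z: "\<bar>z\<bar> < 3*pi"
  let ?S = "{-3*pi<..<3*pi}"
  have zS: "z \<in> ?S" using z by (auto simp: abs_less_iff)
  have cv: "convex ?S" by simp
  have d: "\<And>n x. x \<in> ?S \<Longrightarrow> (uu n has_field_derivative uu' n x) (at x within ?S)"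
  proof -
    fix n x
    have "((\<lambda>z. uu n z) has_real_derivative uu' n x) (at x)" by (rule uu_deriv)
    thus "(uu n has_field_derivative uu' n x) (at x within ?S)"
      by (rule has_field_derivative_at_within[of "\<lambda>z. uu n z", simplified])
  qed
  have uc: "uniformly_convergent_on ?S (\<lambda>n x. \<Sum>i<n. uu' i x)"
  proof (rule Weierstrass_m_test'[OF _ MM_summable])
    fix n x assume "x \<in> ?S"
    hence "\<bar>x\<bar> < 3*pi" by (simp add: abs_less_iff)
    thus "norm (uu' n x) \<le> MM n" using uu'_bound by simp
  qed
  have zi: "z \<in> interior ?S" using zS by simp
  have "((\<lambda>x. \<Sum>n. uu n x) has_field_derivative (\<Sum>n. uu' n z)) (at z)"
    by (rule has_field_derivative_series'(2)[OF cv d uc zS uu_summable[OF z] zi])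
  moreover have "TT = (\<lambda>x. \<Sum>n. uu n x)" by (rule ext) (simp only: TT_def)
  moreover have "TT' z = (\<Sum>n. uu' n z)" by (simp only: TT'_def)
  ultimately show ?thesis by simp
qed

lemma TT'_bound: "\<bar>z\<bar> \<le> 2*pi \<Longrightarrow> \<bar>TT' z\<bar> \<le> (1/pi) * gauss h (2*pi*(of_int C - 1))"
proof -
  assume z: "\<bar>z\<bar> \<le> 2*pi"
  define G where "G = gauss h (2*pi*(of_int C - 1))"
  define B where "B = G / (2*pi)"
  have C0: "0 \<le> 2*pi*(of_int C - 1)" using hC sqh by linarith
  have Ceq: "2*pi*(of_int C - 1) = 2*pi * of_int C - 2*pi" by (simp add: algebra_simps)
  have side: "summable (\<lambda>n. gd h (cc n + s)) \<and> 0 \<le> (\<Sum>n. gd h (cc n + s)) \<and> (\<Sum>n. gd h (cc n + s)) \<le> B"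
    if s: "\<bar>s\<bar> \<le> 2*pi" for s
  proof -
    define t0 where "t0 = cc 0 + s"
    have s1: "-2*pi \<le> s" using s by (simp add: abs_le_iff)
    have cc0: "cc 0 = 2*pi * of_int C + 2*pi" by (simp add: cc_def algebra_simps)
    have t0: "sqrt h + 2*pi \<le> t0" unfolding t0_def cc0 using s1 hC' by linarith
    have eq: "gd h (cc n + s) = gd h (t0 + 2*pi*real n)" for n
      by (simp add: t0_def cc_def algebra_simps)
    from gd_series[OF hpos t0] have sm: "summable (\<lambda>n. gd h (cc n + s))"
      and le: "(\<Sum>n. gd h (cc n + s)) \<le> gauss h (t0 - 2*pi) / (2*pi)" by (simp_all only: eq)
    have "2*pi*(of_int C - 1) \<le> t0 - 2*pi" unfolding t0_def cc0 Ceq using s1 by linarith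
    hence "gauss h (t0 - 2*pi) \<le> G" unfolding G_def using C0 by (rule gauss_mono[OF hpos, rotated])
    hence "gauss h (t0 - 2*pi) / (2*pi) \<le> B" unfolding B_def using pi_gt_zero by (intro divide_right_mono) auto
    moreover have "0 \<le> (\<Sum>n. gd h (cc n + s))"
    proof (rule suminf_nonneg[OF sm])
      fix n have "0 \<le> 2*pi*real n" by simp
      moreover have "cc n + s = t0 + 2*pi*real n" by (simp add: t0_def cc_def algebra_simps)
      ultimately show "0 \<le> gd h (cc n + s)" using t0 sqh pi_gt_zero
        by (intro gd_nonneg[OF hpos]) linarith
    qed
    ultimately show ?thesis using sm le by linarith
  qed
  have zm: "\<bar>-z\<bar> \<le> 2*pi" using z by simp
  note P = side[OF zm] and Q = side[OF z]
  have "TT' z = (\<Sum>n. gd h (cc n + - z) - gd h (cc n + z))"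
    unfolding TT'_def uu'_def by simp
  also have "\<dots> = (\<Sum>n. gd h (cc n + - z)) - (\<Sum>n. gd h (cc n + z))"
    using P Q by (intro suminf_diff[symmetric]) auto
  finally have eqT: "TT' z = (\<Sum>n. gd h (cc n + - z)) - (\<Sum>n. gd h (cc n + z))" .
  have "\<bar>TT' z\<bar> \<le> B" unfolding eqT abs_le_iff using P Q by linarith
  also have "B \<le> (1/pi) * G"
  proof -
    have "0 \<le> G" unfolding G_def using gauss_pos[OF hpos, of "2*pi*(of_int C - 1)"] by simp
    hence "G / (2*pi) \<le> G / pi" using pi_gt_zero by (intro divide_left_mono) auto
    thus ?thesis unfolding B_def by simp
  qed
  finally show ?thesis unfolding G_def .
qed

lemma wrapped_eq: "\<bar>z\<bar> < 3*pi \<Longrightarrow> wrapped_gauss h z = wrapped_gauss_trunc h C z + TT z"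
proof -
  assume z: "\<bar>z\<bar> < 3*pi"
  define g where "g j = gauss h (z + 2*pi*real_of_int j)" for j :: int
  have "2*pi*1 \<le> 2*pi * of_int C" using hC' sqh by linarith
  hence "(1::real) \<le> of_int C" using pi_gt_zero by (simp only: mult_le_cancel_left_pos)
  hence C0: "C \<ge> 1" by simp
  have p_nn: "\<And>n. 0 \<le> gauss h (cc n + z)" "\<And>n. 0 \<le> gauss h (cc n - z)"
    using gauss_pos[OF hpos] by (auto simp: less_imp_le)
  have sP: "summable (\<lambda>n. gauss h (cc n + z))"
  proof (rule summable_comparison_test'[OF uu_summable[OF z]])
    fix n show "norm (gauss h (cc n + z)) \<le> uu n z"
      using p_nn[of n] by (simp add: uu_def)
  qed
  have sQ: "summable (\<lambda>n. gauss h (cc n - z))"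
  proof (rule summable_comparison_test'[OF uu_summable[OF z]])
    fix n show "norm (gauss h (cc n - z)) \<le> uu n z"
      using p_nn[of n] by (simp add: uu_def)
  qed
  define r1 where "r1 n = C + 1 + int n" for n
  define r2 where "r2 n = - C - 1 - int n" for n
  have h1: "(g has_sum (\<Sum>n. gauss h (cc n + z))) (range r1)"
  proof -
    have "inj r1" by (auto simp: r1_def inj_def)
    moreover have "((g \<circ> r1) has_sum (\<Sum>n. gauss h (cc n + z))) UNIV"
    proof -
      have "(g \<circ> r1) = (\<lambda>n. gauss h (cc n + z))"
        by (auto simp: g_def r1_def cc_def algebra_simps)
      thus ?thesis using sums_nonneg_imp_has_sum[OF summable_sums[OF sP] p_nn(1)] by simp
    qed
    ultimately show ?thesis by (simp add: has_sum_reindex)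
  qed
  have h2: "(g has_sum (\<Sum>n. gauss h (cc n - z))) (range r2)"
  proof -
    have "inj r2" by (auto simp: r2_def inj_def)
    moreover have "((g \<circ> r2) has_sum (\<Sum>n. gauss h (cc n - z))) UNIV"
    proof -
      have "(g \<circ> r2) = (\<lambda>n. gauss h (cc n - z))"
      proof
        fix n
        have "(g \<circ> r2) n = gauss h (- (cc n - z))"
          by (simp add: g_def r2_def cc_def algebra_simps)
        thus "(g \<circ> r2) n = gauss h (cc n - z)" by (simp only: gauss_even)
      qed
      thus ?thesis using sums_nonneg_imp_has_sum[OF summable_sums[OF sQ] p_nn(2)] by simp
    qed
    ultimately show ?thesis by (simp add: has_sum_reindex)
  qed
  have h0: "(g has_sum (\<Sum>j\<in>{-C..C}. g j)) {-C..C}" by simp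
  have R1: "range r1 = {C+1..}"
  proof (rule set_eqI, rule iffI)
    fix x assume "x \<in> range r1" thus "x \<in> {C+1..}" by (auto simp: r1_def)
  next
    fix x assume "x \<in> {C+1..}" hence "x = r1 (nat (x - C - 1))" by (simp add: r1_def)
    thus "x \<in> range r1" by (rule range_eqI)
  qed
  have R2: "range r2 = {..-C-1}"
  proof (rule set_eqI, rule iffI)
    fix x assume "x \<in> range r2" thus "x \<in> {..-C-1}" by (auto simp: r2_def)
  next
    fix x assume "x \<in> {..-C-1}" hence "x = r2 (nat (- C - 1 - x))" by (simp add: r2_def)
    thus "x \<in> range r2" by (rule range_eqI)
  qed
  have d1: "{-C..C} \<inter> range r1 = {}" unfolding R1 by auto
  have d2: "({-C..C} \<union> range r1) \<inter> range r2 = {}" unfolding R1 R2 using C0 by auto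
  have "(g has_sum ((\<Sum>j\<in>{-C..C}. g j) + (\<Sum>n. gauss h (cc n + z)) + (\<Sum>n. gauss h (cc n - z))))
          ({-C..C} \<union> range r1 \<union> range r2)"
    by (rule has_sum_Un_disjoint[OF has_sum_Un_disjoint[OF h0 h1 d1] h2 d2])
  moreover have "{-C..C} \<union> range r1 \<union> range r2 = UNIV" unfolding R1 R2 by auto
  ultimately have "(g has_sum ((\<Sum>j\<in>{-C..C}. g j) + (\<Sum>n. gauss h (cc n + z)) + (\<Sum>n. gauss h (cc n - z)))) UNIV"
    by simp
  hence e1: "wrapped_gauss h z = (\<Sum>j\<in>{-C..C}. g j) + (\<Sum>n. gauss h (cc n + z)) + (\<Sum>n. gauss h (cc n - z))"
    unfolding wrapped_gauss_def g_def[abs_def] by (rule infsumI)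
  have e2: "(\<Sum>n. gauss h (cc n + z)) + (\<Sum>n. gauss h (cc n - z)) = TT z"
    unfolding TT_def uu_def using suminf_add[OF sP sQ] by simp
  show ?thesis unfolding e1 wrapped_gauss_trunc_def g_def[symmetric] using e2 by simp
qed

end

theorem theorem10:
  fixes h :: real and C :: int and n :: nat and xs :: "nat \<Rightarrow> real"
  assumes "h > 0"
    and "n \<ge> 1"
    and "\<And>i. i < n \<Longrightarrow> xs i \<in> {-pi..pi}"
    and "2*pi*(of_int C - 1) \<ge> sqrt h"
  shows "(SUP x\<in>{-pi..pi}.
            \<bar>deriv (\<lambda>y. (1 / real n) * (\<Sum>i<n. wrapped_gauss h (y - xs i))) x
             - deriv (\<lambda>y. (1 / real n) * (\<Sum>i<n. wrapped_gauss_trunc h C (y - xs i))) x\<bar>)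
         \<le> (1/pi) * gauss h (2*pi*(of_int C - 1))"
proof -
  note hp = assms(1) and hc = assms(4)
  define B where "B = (1/pi) * gauss h (2*pi*(of_int C - 1))"
  define G where "G = (\<lambda>y. (1 / real n) * (\<Sum>i<n. wrapped_gauss_trunc h C (y - xs i)))"
  define F where "F = (\<lambda>y. (1 / real n) * (\<Sum>i<n. wrapped_gauss h (y - xs i)))"
  define H where "H = (\<lambda>y. (1 / real n) * (\<Sum>i<n. TT h C (y - xs i)))"
  define TD where "TD = (\<lambda>z. \<Sum>j\<in>{-C..C}. - gd h (z + 2 * pi * real_of_int j) * 1)"
  have trd: "((\<lambda>y. wrapped_gauss_trunc h C y) has_real_derivative TD z) (at z)" for z
    unfolding wrapped_gauss_trunc_def TD_def
  proof (rule DERIV_sum)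
    fix j :: int
    have "((\<lambda>y. y + 2 * pi * real_of_int j) has_real_derivative 1) (at z)"
      by (auto intro!: derivative_eq_intros)
    thus "((\<lambda>y. gauss h (y + 2 * pi * real_of_int j)) has_real_derivative - gd h (z + 2 * pi * real_of_int j) * 1) (at z)"
      by (rule DERIV_chain2[OF gauss_deriv[OF hp]])
  qed
  have sh: "((\<lambda>y. y - xs i) has_real_derivative 1) (at x)" for i x
    by (auto intro!: derivative_eq_intros)
  have bnd: "\<bar>deriv F x - deriv G x\<bar> \<le> B" if x: "x \<in> {-pi..pi}" for x
  proof -
    define GD where "GD = (1 / real n) * (\<Sum>i<n. TD (x - xs i) * 1)"
    define HD where "HD = (1 / real n) * (\<Sum>i<n. TT' h C (x - xs i) * 1)"
    have xi: "\<bar>x - xs i\<bar> \<le> 2*pi" if "i < n" for i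
      using x assms(3)[OF that] by (auto simp: abs_le_iff)
    have Gd: "(G has_real_derivative GD) (at x)"
      unfolding G_def GD_def
      by (intro DERIV_cmult DERIV_sum DERIV_chain2[OF trd sh])
    have Hd: "(H has_real_derivative HD) (at x)"
      unfolding H_def HD_def
    proof (intro DERIV_cmult DERIV_sum)
      fix i assume "i \<in> {..<n}"
      hence "i < n" by simp
      hence "\<bar>x - xs i\<bar> \<le> 2*pi" by (rule xi)
      hence "\<bar>x - xs i\<bar> < 3*pi" using pi_gt_zero by linarith
      thus "((\<lambda>y. TT h C (y - xs i)) has_real_derivative TT' h C (x - xs i) * 1) (at x)"
        by (rule DERIV_chain2[OF TT_deriv[OF hp hc] sh])
    qed
    have GH: "((\<lambda>y. G y + H y) has_real_derivative GD + HD) (at x)"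
      by (rule DERIV_add[OF Gd Hd])
    have eqU: "G y + H y = F y" if y: "y \<in> {-2*pi<..<2*pi}" for y
    proof -
      have "wrapped_gauss h (y - xs i) = wrapped_gauss_trunc h C (y - xs i) + TT h C (y - xs i)"
        if "i \<in> {..<n}" for i
      proof (rule wrapped_eq[OF hp hc])
        show "\<bar>y - xs i\<bar> < 3*pi" using y assms(3)[of i] that by (auto simp: abs_less_iff)
      qed
      hence "(\<Sum>i<n. wrapped_gauss h (y - xs i)) = (\<Sum>i<n. wrapped_gauss_trunc h C (y - xs i)) + (\<Sum>i<n. TT h C (y - xs i))"
        by (simp add: sum.distrib)
      thus ?thesis unfolding F_def G_def H_def by (simp add: distrib_left)
    qed
    have "x \<in> {-2*pi<..<2*pi}" using x pi_gt_zero by (simp only: atLeastAtMost_iff greaterThanLessThan_iff) linarith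
    hence Fd: "(F has_real_derivative GD + HD) (at x)"
      by (rule has_field_derivative_transform_within_open[OF GH open_greaterThanLessThan _ eqU])
    have "deriv F x - deriv G x = HD"
      using DERIV_imp_deriv[OF Fd] DERIV_imp_deriv[OF Gd] by simp
    moreover have "\<bar>HD\<bar> \<le> (1 / real n) * (\<Sum>i<n. \<bar>TT' h C (x - xs i)\<bar>)"
      unfolding HD_def by (simp add: abs_mult) (intro divide_right_mono sum_abs; simp)
    moreover have "(1 / real n) * (\<Sum>i<n. \<bar>TT' h C (x - xs i)\<bar>) \<le> (1 / real n) * (\<Sum>i<n. B)"
      unfolding B_def using xi by (intro mult_left_mono sum_mono TT'_bound[OF hp hc]) auto
    moreover have "(1 / real n) * (\<Sum>i<n. B) = B" using assms(2) by simp
    ultimately show ?thesis by linarith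
  qed
  show ?thesis
    unfolding F_def[symmetric] G_def[symmetric] B_def[symmetric]
    by (rule cSUP_least) (use bnd in auto)
qed

end
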